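(* Let $(F^kx)_{m\le k\le n}$ be a defocusing orbit segment of the billiard map $F$ on $Q(\phi_*,R)$. Let $m'\le m$ and $n'\ge n$ be such that the base points $p(F^kx)$, $m'\le k\le m$, all lie on one circular boundary arc, and the base points $p(F^kx)$, $n\le k\le n'$, all lie on one circular boundary arc. Then the segment $(F^kx)_{m'\le k\le n'}$ is defocusing (with the same sign).
   Context: $Q(\phi_*,R)$ is the asymmetric lemon table, the intersection of two disks whose boundary consists of two circular arcs $\Gamma_r,\Gamma_R$; phase space points $x$ are inward unit vectors based at $p(x)\in\Gamma_r\cup\Gamma_R$ with coordinates $(\phi,\theta)$ ($\phi$ the angular position on the circle, $\theta\in(0,\pi)$ the angle from the positive tangent direction); $F$ is the billiard map. With $d(x)=\rho\sin\theta$ ($\rho$ the radius of the arc containing $p(x)$) and $\tau(x)=|p(x)p(Fx)|$, the derivative in $(\phi,\theta)$ coordinates is $$D_xF=\frac1{d(Fx)}\begin{bmatrix}\tau(x)-d(x)&\tau(x)\\ \tau(x)-d(x)-d(Fx)&\tau(x)-d(Fx)\end{bmatrix}.$$ A finite orbit segment $(F^kx)_{m\le k\le n}$ is positively (resp. negatively) defocusing if all four entries of the matrix $D_{F^mx}F^{n-m}$ (in $(\phi,\theta)$ coordinates) are positive (resp. negative); defocusing means positively or negatively defocusing. *)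

theory Defs
  imports "HOL-Analysis.Analysis"
begin

text \<open>
  A lemon table is given by two
  circles: arc index False is the arc Gamma_r, arc index True is the arc Gamma_R.
  ctr i is the centre and rad i the radius of the circle carrying arc i.
  The table Q is the intersection of the two closed disks.
\<close>

definition lemon_table :: "(bool \<Rightarrow> complex) \<Rightarrow> (bool \<Rightarrow> real) \<Rightarrow> bool" where
  "lemon_table ctr rad \<longleftrightarrow> rad False > 0 \<and> rad True > 0 \<and>
     \<bar>rad False - rad True\<bar> < cmod (ctr False - ctr True) \<and>
     cmod (ctr False - ctr True) < rad False + rad True"

definition arc :: "(bool \<Rightarrow> complex) \<Rightarrow> (bool \<Rightarrow> real) \<Rightarrow> bool \<Rightarrow> complex set" where
  "arc ctr rad i = {z. cmod (z - ctr i) = rad i \<and> cmod (z - ctr (\<not> i)) \<le> rad (\<not> i)}"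

text \<open>Phase points: (arc index, phi, theta).\<close>
type_synonym phase = "bool \<times> real \<times> real"

definition bpt :: "(bool \<Rightarrow> complex) \<Rightarrow> (bool \<Rightarrow> real) \<Rightarrow> phase \<Rightarrow> complex" where
  "bpt ctr rad x = (case x of (i, \<phi>, \<theta>) \<Rightarrow> ctr i + complex_of_real (rad i) * cis \<phi>)"

text \<open>Unit vector at angle theta from the positive (counterclockwise) tangent
  direction cis (phi + pi/2), rotated towards the inner normal.\<close>
definition dirv :: "phase \<Rightarrow> complex" where
  "dirv x = (case x of (i, \<phi>, \<theta>) \<Rightarrow> cis (\<phi> + pi / 2 + \<theta>))"

text \<open>Phase space: inward unit vectors based at non-corner boundary points,
  with phi normalised to (-pi, pi].\<close>
definition phase_space :: "(bool \<Rightarrow> complex) \<Rightarrow> (bool \<Rightarrow> real) \<Rightarrow> phase set" where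
  "phase_space ctr rad = {(i, \<phi>, \<theta>). - pi < \<phi> \<and> \<phi> \<le> pi \<and> 0 < \<theta> \<and> \<theta> < pi \<and>
      bpt ctr rad (i, \<phi>, \<theta>) \<in> arc ctr rad i \<and>
      cmod (bpt ctr rad (i, \<phi>, \<theta>) - ctr (\<not> i)) < rad (\<not> i)}"

text \<open>y is the billiard image of x: the base point of y is hit by the ray from
  p(x) in direction v(x), and v(y) is the mirror image of v(x) in the tangent
  line at p(y) (reflection across the line spanned by the unit vector u is
  z \<mapsto> u^2 * cnj z).\<close>
definition bounce :: "(bool \<Rightarrow> complex) \<Rightarrow> (bool \<Rightarrow> real) \<Rightarrow> phase \<Rightarrow> phase \<Rightarrow> bool" where
  "bounce ctr rad x y \<longleftrightarrow> x \<in> phase_space ctr rad \<and> y \<in> phase_space ctr rad \<and>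
     (\<exists>t>0. bpt ctr rad y = bpt ctr rad x + complex_of_real t * dirv x) \<and>
     dirv y = (cis (fst (snd y) + pi / 2))\<^sup>2 * cnj (dirv x)"

definition billiard_map :: "(bool \<Rightarrow> complex) \<Rightarrow> (bool \<Rightarrow> real) \<Rightarrow> phase \<Rightarrow> phase" where
  "billiard_map ctr rad x = (SOME y. bounce ctr rad x y)"

definition tau :: "(bool \<Rightarrow> complex) \<Rightarrow> (bool \<Rightarrow> real) \<Rightarrow> phase \<Rightarrow> real" where
  "tau ctr rad x = cmod (bpt ctr rad (billiard_map ctr rad x) - bpt ctr rad x)"

definition dfun :: "(bool \<Rightarrow> real) \<Rightarrow> phase \<Rightarrow> real" where
  "dfun rad x = (case x of (i, \<phi>, \<theta>) \<Rightarrow> rad i * sin \<theta>)"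

definition DF :: "(bool \<Rightarrow> complex) \<Rightarrow> (bool \<Rightarrow> real) \<Rightarrow> phase \<Rightarrow> real^2^2" where
  "DF ctr rad x =
     (let t = tau ctr rad x; d = dfun rad x; d' = dfun rad (billiard_map ctr rad x) in
      (\<chi> i j. if i = 1 then (if j = 1 then (t - d) / d' else t / d')
                     else (if j = 1 then (t - d - d') / d' else (t - d') / d')))"

fun DFpow :: "(bool \<Rightarrow> complex) \<Rightarrow> (bool \<Rightarrow> real) \<Rightarrow> phase \<Rightarrow> nat \<Rightarrow> real^2^2" where
  "DFpow ctr rad x 0 = mat 1"
| "DFpow ctr rad x (Suc n) = DF ctr rad ((billiard_map ctr rad ^^ n) x) ** DFpow ctr rad x n"

definition pos_defocusing :: "(bool \<Rightarrow> complex) \<Rightarrow> (bool \<Rightarrow> real) \<Rightarrow> phase \<Rightarrow> nat \<Rightarrow> nat \<Rightarrow> bool" where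
  "pos_defocusing ctr rad x m n \<longleftrightarrow>
     (\<forall>i j. DFpow ctr rad ((billiard_map ctr rad ^^ m) x) (n - m) $ i $ j > 0)"

definition neg_defocusing :: "(bool \<Rightarrow> complex) \<Rightarrow> (bool \<Rightarrow> real) \<Rightarrow> phase \<Rightarrow> nat \<Rightarrow> nat \<Rightarrow> bool" where
  "neg_defocusing ctr rad x m n \<longleftrightarrow>
     (\<forall>i j. DFpow ctr rad ((billiard_map ctr rad ^^ m) x) (n - m) $ i $ j < 0)"

definition defocusing :: "(bool \<Rightarrow> complex) \<Rightarrow> (bool \<Rightarrow> real) \<Rightarrow> phase \<Rightarrow> nat \<Rightarrow> nat \<Rightarrow> bool" where
  "defocusing ctr rad x m n \<longleftrightarrow> pos_defocusing ctr rad x m n \<or> neg_defocusing ctr rad x m n"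

end

theory Submission
  imports Defs
begin

lemma geom:
  fixes \<rho> t \<phi> \<theta> \<psi> \<eta> :: real and c :: complex
  assumes rho: "\<rho> > 0" and t: "t > 0"
    and p: "c + complex_of_real \<rho> * cis \<psi> = c + complex_of_real \<rho> * cis \<phi> + complex_of_real t * cis (\<phi> + pi/2 + \<theta>)"
    and d: "cis (\<psi> + pi/2 + \<eta>) = (cis (\<psi> + pi/2))\<^sup>2 * cnj (cis (\<phi> + pi/2 + \<theta>))"
  shows "t = 2 * \<rho> * sin \<theta> \<and> sin \<eta> = sin \<theta>"
proof -
  have p1: "complex_of_real \<rho> * cis \<psi> = cis \<phi> * (complex_of_real \<rho> + complex_of_real t * cis (pi/2 + \<theta>))"
    using p by (simp add: cis_mult[symmetric] algebra_simps)
  have "cmod (complex_of_real \<rho> * cis \<psi>) = \<rho>" using rho by (simp add: norm_mult)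
  hence "cmod (complex_of_real \<rho> + complex_of_real t * cis (pi/2 + \<theta>)) = \<rho>"
    using p1 by (simp add: norm_mult)
  hence "cmod (Complex (\<rho> - t * sin \<theta>) (t * cos \<theta>)) = \<rho>"
    by (simp add: cis.ctr cos_add sin_add Complex_eq algebra_simps)
  hence "(\<rho> - t * sin \<theta>)^2 + (t * cos \<theta>)^2 = \<rho>^2"
    using rho by (simp add: cmod_def) (metis real_sqrt_pow2 sum_power2_ge_zero add_nonneg_nonneg zero_le_power2)
  moreover have "(\<rho> - t * sin \<theta>)^2 + (t * cos \<theta>)^2 = \<rho>^2 - 2 * \<rho> * t * sin \<theta> + t^2 * ((sin \<theta>)^2 + (cos \<theta>)^2)"
    by (simp only: power2_eq_square algebra_simps)
  ultimately have "t * t = t * (2 * \<rho> * sin \<theta>)"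
    using sin_cos_squared_add[of \<theta>] by (simp add: power2_eq_square mult.assoc)
  hence "t * (t - 2 * \<rho> * sin \<theta>) = 0"
    by (simp add: algebra_simps)
  hence tt: "t = 2 * \<rho> * sin \<theta>" using t by simp
  have "complex_of_real \<rho> * cis \<psi> = complex_of_real \<rho> * (cis \<phi> * (1 + complex_of_real (2 * sin \<theta>) * cis (pi/2 + \<theta>)))"
    using p1 tt by (simp add: algebra_simps)
  hence "cis \<psi> = cis \<phi> * (1 + complex_of_real (2 * sin \<theta>) * cis (pi/2 + \<theta>))"
    using rho by (subst (asm) mult_left_cancel) auto
  also have "1 + complex_of_real (2 * sin \<theta>) * cis (pi/2 + \<theta>) = cis (2*\<theta>)"
    by (simp add: complex_eq_iff cos_add sin_add cos_double sin_double power2_eq_square) (smt (verit) sin_cos_squared_add power2_eq_square)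
  finally have psi: "cis \<psi> = cis (\<phi> + 2*\<theta>)" by (simp add: cis_mult)
  have "cis (\<psi> + pi/2) * cis \<eta> = cis (\<psi> + pi/2) * (cis (\<psi> + pi/2) * cis (-(\<phi> + pi/2 + \<theta>)))"
    using d by (simp add: cis_mult power2_eq_square cis_cnj algebra_simps)
  hence "cis \<eta> = cis (\<psi> + pi/2) * cis (-(\<phi> + pi/2 + \<theta>))"
    by (metis cis_neq_zero mult_left_cancel)
  also have "\<dots> = cis \<psi> * cis (-\<phi> - \<theta>)" by (simp add: cis_mult algebra_simps)
  also have "\<dots> = cis \<theta>" using psi by (simp add: cis_mult)
  finally have "sin \<eta> = sin \<theta>" by (metis cis.sel(2))
  with tt show ?thesis by simp
qed

lemma arc_index:
  assumes "x \<in> phase_space ctr rad" "bpt ctr rad x \<in> arc ctr rad i"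
  shows "fst x = i"
proof (rule ccontr)
  assume ne: "fst x \<noteq> i"
  obtain j \<phi> \<theta> where x: "x = (j, \<phi>, \<theta>)" by (cases x) auto
  have "i = (\<not> j)" using ne x by auto
  thus False using assms x by (auto simp: phase_space_def arc_def)
qed

definition Jm :: "real^2^2" where
  "Jm = (\<chi> i j. if i = 1 then (if j = 1 then 1 else 2) else (if j = 1 then 0 else 1))"

lemma same_arc_DF:
  assumes b: "bounce ctr rad x (billiard_map ctr rad x)"
    and a1: "bpt ctr rad x \<in> arc ctr rad i"
    and a2: "bpt ctr rad (billiard_map ctr rad x) \<in> arc ctr rad i"
    and rpos: "rad i > 0"
  shows "DF ctr rad x = Jm"
proof -
  define y where "y = billiard_map ctr rad x"
  obtain i1 \<phi> \<theta> where x: "x = (i1, \<phi>, \<theta>)" by (cases x) auto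
  obtain i2 \<psi> \<eta> where y: "y = (i2, \<psi>, \<eta>)" by (cases y) auto
  have xs: "x \<in> phase_space ctr rad" and ys: "y \<in> phase_space ctr rad"
    using b by (auto simp: bounce_def y_def)
  have "i1 = i" using arc_index[OF xs a1] x by simp
  have "i2 = i" using arc_index[OF ys] a2 y y_def by simp
  obtain t where t: "t > 0" and tp: "bpt ctr rad y = bpt ctr rad x + complex_of_real t * dirv x"
    using b by (auto simp: bounce_def y_def)
  have dv: "dirv y = (cis (fst (snd y) + pi / 2))\<^sup>2 * cnj (dirv x)"
    using b by (auto simp: bounce_def y_def)
  have th: "0 < \<theta>" "\<theta> < pi" using xs x by (auto simp: phase_space_def)
  have g: "t = 2 * rad i * sin \<theta> \<and> sin \<eta> = sin \<theta>"
    apply (rule geom[OF rpos t, of "ctr i" \<psi> \<phi> \<theta> \<eta>])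
    using tp dv x y \<open>i1 = i\<close> \<open>i2 = i\<close> by (auto simp: bpt_def dirv_def)
  have "tau ctr rad x = cmod (bpt ctr rad y - bpt ctr rad x)" by (simp add: tau_def y_def)
  hence tau: "tau ctr rad x = t"
    using tp t by (simp add: dirv_def norm_mult split: prod.splits)
  have sp: "sin \<theta> > 0" using th by (simp add: sin_gt_zero)
  have d1: "dfun rad x = rad i * sin \<theta>" using x \<open>i1 = i\<close> by (simp add: dfun_def)
  have d2: "dfun rad y = rad i * sin \<theta>" using y \<open>i2 = i\<close> g by (simp add: dfun_def)
  have pos: "rad i * sin \<theta> > 0" using rpos sp by simp
  show ?thesis
    unfolding DF_def Let_def y_def[symmetric] tau d1 d2 Jm_def
    using g pos by (auto simp: vec_eq_iff forall_2 field_simps)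
qed

lemma DFpow_add:
  "DFpow ctr rad z (a + b) = DFpow ctr rad ((billiard_map ctr rad ^^ a) z) b ** DFpow ctr rad z a"
proof (induction b)
  case 0
  then show ?case by (simp add: matrix_mul_lid)
next
  case (Suc b)
  have "DFpow ctr rad z (a + Suc b) = DF ctr rad ((billiard_map ctr rad ^^ (b + a)) z) ** DFpow ctr rad z (a + b)"
    by (simp add: add.commute)
  also have "\<dots> = DF ctr rad ((billiard_map ctr rad ^^ b) ((billiard_map ctr rad ^^ a) z)) **
      (DFpow ctr rad ((billiard_map ctr rad ^^ a) z) b ** DFpow ctr rad z a)"
    by (simp add: Suc.IH funpow_add)
  finally show ?case by (simp add: matrix_mul_assoc)
qed

definition sgnpos :: "real \<Rightarrow> real^2^2 \<Rightarrow> bool" where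
  "sgnpos s A \<longleftrightarrow> (\<forall>i j. s * A $ i $ j > 0)"

lemma sgnpos_right: "sgnpos s A \<Longrightarrow> sgnpos s (A ** Jm)"
  unfolding sgnpos_def Jm_def
  by (auto simp: forall_2 matrix_matrix_mult_def sum_2 algebra_simps)

lemma sgnpos_left: "sgnpos s A \<Longrightarrow> sgnpos s (Jm ** A)"
  unfolding sgnpos_def Jm_def
  by (auto simp: forall_2 matrix_matrix_mult_def sum_2 algebra_simps)

lemma extend:
  fixes ctr :: "bool \<Rightarrow> complex" and rad :: "bool \<Rightarrow> real"
    and x :: phase and m' m n n' :: nat
  assumes table: "lemon_table ctr rad"
    and order: "m' \<le> m" "m \<le> n" "n \<le> n'"
    and orbit: "\<forall>k. m' \<le> k \<and> k < n' \<longrightarrow>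
                  bounce ctr rad ((billiard_map ctr rad ^^ k) x) ((billiard_map ctr rad ^^ Suc k) x)"
    and arc1: "\<exists>i. \<forall>k. m' \<le> k \<and> k \<le> m \<longrightarrow>
                  bpt ctr rad ((billiard_map ctr rad ^^ k) x) \<in> arc ctr rad i"
    and arc2: "\<exists>i. \<forall>k. n \<le> k \<and> k \<le> n' \<longrightarrow>
                  bpt ctr rad ((billiard_map ctr rad ^^ k) x) \<in> arc ctr rad i"
    and sp: "sgnpos s (DFpow ctr rad ((billiard_map ctr rad ^^ m) x) (n - m))"
  shows "sgnpos s (DFpow ctr rad ((billiard_map ctr rad ^^ m') x) (n' - m'))"
proof -
  let ?F = "billiard_map ctr rad"
  have rp: "\<And>i. rad i > 0" using table unfolding lemon_table_def by (metis (full_types))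
  have J: "DF ctr rad ((?F ^^ k) x) = Jm" if "m' \<le> k" "k < n'"
      "bpt ctr rad ((?F ^^ k) x) \<in> arc ctr rad i" "bpt ctr rad ((?F ^^ Suc k) x) \<in> arc ctr rad i" for k i
    apply (rule same_arc_DF[OF _ _ _ rp])
    using that orbit by auto
  obtain i1 where i1: "\<forall>k. m' \<le> k \<and> k \<le> m \<longrightarrow> bpt ctr rad ((?F ^^ k) x) \<in> arc ctr rad i1"
    using arc1 by blast
  obtain i2 where i2: "\<forall>k. n \<le> k \<and> k \<le> n' \<longrightarrow> bpt ctr rad ((?F ^^ k) x) \<in> arc ctr rad i2"
    using arc2 by blast
  have R: "n + j \<le> n' \<longrightarrow> sgnpos s (DFpow ctr rad ((?F ^^ m) x) (n + j - m))" for j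
  proof (induction j)
    case 0 then show ?case using sp by simp
  next
    case (Suc j)
    show ?case
    proof
      assume le: "n + Suc j \<le> n'"
      have e: "n + Suc j - m = Suc (n + j - m)" using order by simp
      have f: "(?F ^^ (n + j - m)) ((?F ^^ m) x) = (?F ^^ (n + j)) x"
      proof -
        have "n + j = (n + j - m) + m" using order by simp
        hence "(?F ^^ (n + j)) x = (?F ^^ (n + j - m) \<circ> ?F ^^ m) x" by (metis funpow_add)
        thus ?thesis by simp
      qed
      have "DF ctr rad ((?F ^^ (n + j)) x) = Jm"
        apply (rule J[of _ i2]) using le order i2[rule_format, of "n+j"] i2[rule_format, of "Suc (n+j)"] by auto
      then show "sgnpos s (DFpow ctr rad ((?F ^^ m) x) (n + Suc j - m))"
        unfolding e using Suc le f by (simp add: sgnpos_left)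
    qed
  qed
  have R': "sgnpos s (DFpow ctr rad ((?F ^^ m) x) (n' - m))"
    using R[of "n' - n"] order by simp
  have L: "j \<le> m - m' \<longrightarrow> sgnpos s (DFpow ctr rad ((?F ^^ (m - j)) x) (n' - (m - j)))" for j
  proof (induction j)
    case 0 then show ?case using R' by simp
  next
    case (Suc j)
    show ?case
    proof
      assume le: "Suc j \<le> m - m'"
      define a where "a = m - Suc j"
      have a: "m' \<le> a" "a < m" "Suc a = m - j" using le order by (auto simp: a_def)
      have e: "n' - a = 1 + (n' - (m - j))" using a order by simp
      have "DFpow ctr rad ((?F ^^ a) x) (1 + (n' - (m - j))) =
          DFpow ctr rad ((?F ^^ 1) ((?F ^^ a) x)) (n' - (m - j)) ** DFpow ctr rad ((?F ^^ a) x) 1"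
        by (rule DFpow_add)
      moreover have "(?F ^^ 1) ((?F ^^ a) x) = (?F ^^ (m - j)) x" using a(3) by (metis funpow.simps(2) o_apply One_nat_def funpow_0)
      moreover have "DFpow ctr rad ((?F ^^ a) x) 1 = Jm"
      proof -
        have "DF ctr rad ((?F ^^ a) x) = Jm"
          apply (rule J[of _ i1]) using a order i1[rule_format, of a] i1[rule_format, of "Suc a"] by auto
        thus ?thesis by (simp add: matrix_mul_rid)
      qed
      ultimately show "sgnpos s (DFpow ctr rad ((?F ^^ (m - Suc j)) x) (n' - (m - Suc j)))"
        using Suc le by (simp add: a_def[symmetric] e sgnpos_right)
    qed
  qed
  show ?thesis using L[of "m - m'"] order by simp
qed

theorem mainTheorem5:
  fixes ctr :: "bool \<Rightarrow> complex" and rad :: "bool \<Rightarrow> real"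
    and x :: phase and m' m n n' :: nat
  assumes table: "lemon_table ctr rad"
    and order: "m' \<le> m" "m \<le> n" "n \<le> n'"
    and orbit: "\<forall>k. m' \<le> k \<and> k < n' \<longrightarrow>
                  bounce ctr rad ((billiard_map ctr rad ^^ k) x) ((billiard_map ctr rad ^^ Suc k) x)"
    and defoc: "defocusing ctr rad x m n"
    and arc1: "\<exists>i. \<forall>k. m' \<le> k \<and> k \<le> m \<longrightarrow>
                  bpt ctr rad ((billiard_map ctr rad ^^ k) x) \<in> arc ctr rad i"
    and arc2: "\<exists>i. \<forall>k. n \<le> k \<and> k \<le> n' \<longrightarrow>
                  bpt ctr rad ((billiard_map ctr rad ^^ k) x) \<in> arc ctr rad i"
  shows "defocusing ctr rad x m' n' \<and>
         (pos_defocusing ctr rad x m n \<longrightarrow> pos_defocusing ctr rad x m' n') \<and>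
         (neg_defocusing ctr rad x m n \<longrightarrow> neg_defocusing ctr rad x m' n')"
proof -
  have P: "pos_defocusing ctr rad x m n \<longrightarrow> pos_defocusing ctr rad x m' n'"
  proof
    assume "pos_defocusing ctr rad x m n"
    hence "sgnpos 1 (DFpow ctr rad ((billiard_map ctr rad ^^ m) x) (n - m))"
      by (simp add: sgnpos_def pos_defocusing_def)
    from extend[OF table order orbit arc1 arc2 this]
    show "pos_defocusing ctr rad x m' n'" by (simp add: sgnpos_def pos_defocusing_def)
  qed
  have N: "neg_defocusing ctr rad x m n \<longrightarrow> neg_defocusing ctr rad x m' n'"
  proof
    assume "neg_defocusing ctr rad x m n"
    hence "sgnpos (-1) (DFpow ctr rad ((billiard_map ctr rad ^^ m) x) (n - m))"
      by (simp add: sgnpos_def neg_defocusing_def)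
    from extend[OF table order orbit arc1 arc2 this]
    show "neg_defocusing ctr rad x m' n'" by (simp add: sgnpos_def neg_defocusing_def)
  qed
  show ?thesis using P N defoc by (auto simp: defocusing_def)
qed

end
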